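(* Let $X$ be a $T_1$ space with $|X|<\mathfrak b$. Then $X$ is set strongly star Hurewicz if and only if $e(X)=\omega$.
   Context: For a family $\mathcal U$ of subsets of $X$ and $A\subseteq X$, $st(A,\mathcal U)=\bigcup\{U\in\mathcal U: U\cap A\neq\emptyset\}$. $X$ is set strongly star Hurewicz if for every nonempty $A\subseteq X$ and every sequence $(\mathcal U_n:n\in\omega)$ of families of open sets with $\overline A\subseteq\bigcup\mathcal U_n$ for all $n$, there are finite $F_n\subseteq\overline A$ such that each $x\in A$ lies in $st(F_n,\mathcal U_n)$ for all but finitely many $n$. $e(X)$ is the supremum of cardinalities of closed discrete subsets ($e(X)=\omega$ means all closed discrete subsets are countable). $\mathfrak b$ is the minimal cardinality of a $\leq^*$-unbounded subset of $\omega^\omega$. *)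

theory Defs
  imports "HOL-Analysis.Analysis"
begin

definition st :: "'a set \<Rightarrow> 'a set set \<Rightarrow> 'a set" where
  "st A \<U> = \<Union>{U \<in> \<U>. U \<inter> A \<noteq> {}}"

definition set_strongly_star_Hurewicz :: "'a topology \<Rightarrow> bool" where
  "set_strongly_star_Hurewicz X \<longleftrightarrow>
     (\<forall>A \<U>. A \<noteq> {} \<and> A \<subseteq> topspace X \<and>
        (\<forall>n. (\<forall>U\<in>\<U> n. openin X U) \<and> X closure_of A \<subseteq> \<Union>(\<U> n)) \<longrightarrow>
        (\<exists>F :: nat \<Rightarrow> 'a set. (\<forall>n. finite (F n) \<and> F n \<subseteq> X closure_of A) \<and>
           (\<forall>x\<in>A. \<forall>\<^sub>F n in sequentially. x \<in> st (F n) (\<U> n))))"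

text \<open>Closed discrete subsets; e(X) = omega means all of them are countable.\<close>
definition closed_discrete :: "'a topology \<Rightarrow> 'a set \<Rightarrow> bool" where
  "closed_discrete X D \<longleftrightarrow> closedin X D \<and> subtopology X D = discrete_topology D"

definition extent_countable :: "'a topology \<Rightarrow> bool" where
  "extent_countable X \<longleftrightarrow> (\<forall>D. closed_discrete X D \<longrightarrow> countable D)"

definition le_star :: "(nat \<Rightarrow> nat) \<Rightarrow> (nat \<Rightarrow> nat) \<Rightarrow> bool" where
  "le_star f g \<longleftrightarrow> (\<forall>\<^sub>F n in sequentially. f n \<le> g n)"

definition unbounded_family :: "(nat \<Rightarrow> nat) set \<Rightarrow> bool" where
  "unbounded_family F \<longleftrightarrow> \<not> (\<exists>g. \<forall>f\<in>F. le_star f g)"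

text \<open>|S| < b, where b = min{|F| : F unbounded}: S is strictly smaller than every unbounded family.\<close>
definition less_than_b :: "'a set \<Rightarrow> bool" where
  "less_than_b S \<longleftrightarrow> (\<forall>F. unbounded_family F \<longrightarrow> (card_of S, card_of F) \<in> ordLess)"

end

theory Submission
  imports Defs
begin

lemma sep_maximal:
  fixes X :: "'a topology"
  assumes t1: "t1_space X" and Cc: "closedin X C"
    and opn: "\<forall>U\<in>\<U>. openin X U" and cov: "C \<subseteq> \<Union>\<U>"
  shows "\<exists>M. M \<subseteq> C \<and> C \<subseteq> st M \<U> \<and> closed_discrete X M"
proof -
  define P where "P = {D. D \<subseteq> C \<and> (\<forall>x\<in>D. \<forall>y\<in>D. x \<noteq> y \<longrightarrow> \<not>(\<exists>U\<in>\<U>. x\<in>U \<and> y\<in>U))}"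
  have "\<forall>Ch\<in>chains P. \<Union>Ch \<in> P"
  proof
    fix Ch assume ch: "Ch \<in> chains P"
    show "\<Union>Ch \<in> P"
      unfolding P_def
    proof (intro CollectI conjI ballI impI)
      show "\<Union>Ch \<subseteq> C" using ch unfolding chains_def P_def by blast
    next
      fix x y assume xy: "x \<in> \<Union>Ch" "y \<in> \<Union>Ch" "x \<noteq> y"
      then obtain D1 D2 where d: "D1 \<in> Ch" "D2 \<in> Ch" "x \<in> D1" "y \<in> D2" by blast
      with ch have "D1 \<subseteq> D2 \<or> D2 \<subseteq> D1" unfolding chains_def chain_subset_def by blast
      moreover have "D1 \<in> P" "D2 \<in> P" using d ch unfolding chains_def by auto
      ultimately show "\<not>(\<exists>U\<in>\<U>. x\<in>U \<and> y\<in>U)" using d xy unfolding P_def by blast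
    qed
  qed
  then obtain M where MP: "M \<in> P" and Mmax: "\<forall>D\<in>P. M \<subseteq> D \<longrightarrow> D = M"
    using Zorn_Lemma by blast
  have MC: "M \<subseteq> C" and Msep: "\<And>x y U. x\<in>M \<Longrightarrow> y\<in>M \<Longrightarrow> x\<noteq>y \<Longrightarrow> U\<in>\<U> \<Longrightarrow> x\<in>U \<Longrightarrow> y \<notin> U"
    using MP unfolding P_def by blast+
  have Cst: "C \<subseteq> st M \<U>"
  proof
    fix z assume zC: "z \<in> C"
    show "z \<in> st M \<U>"
    proof (rule ccontr)
      assume nz: "z \<notin> st M \<U>"
      have zM: "z \<notin> M" using zC cov nz unfolding st_def by blast
      have "insert z M \<in> P" using MP zC nz unfolding P_def st_def by blast
      then have "insert z M = M" using Mmax by blast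
      then show False using zM by blast
    qed
  qed
  have CX: "C \<subseteq> topspace X" using Cc closedin_subset by blast
  have single: "\<exists>U. openin X U \<and> x \<in> U \<and> U \<inter> M = {x}" if xM: "x \<in> M" for x
  proof -
    obtain U where "U \<in> \<U>" "x \<in> U" using xM MC cov by blast
    note UU = this
    have "U \<inter> M \<subseteq> {x}"
    proof
      fix y assume "y \<in> U \<inter> M"
      then show "y \<in> {x}" using Msep[of x y U] xM UU by blast
    qed
    then have "U \<inter> M = {x}" using xM UU by blast
    then show ?thesis using opn UU by blast
  qed
  have clo: "X closure_of M \<subseteq> M"
  proof
    fix z assume z: "z \<in> X closure_of M"
    have "X closure_of M \<subseteq> X closure_of C" by (rule closure_of_mono[OF MC])
    then have zC: "z \<in> C" using z Cc closure_of_closedin by blast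
    show "z \<in> M"
    proof (rule ccontr)
      assume zM: "z \<notin> M"
      obtain U where U: "U \<in> \<U>" "z \<in> U" using zC cov by blast
      have fin: "finite (U \<inter> M)"
      proof (cases "U \<inter> M = {}")
        case False
        then obtain a where a: "a \<in> U \<inter> M" by blast
        have "U \<inter> M \<subseteq> {a}"
        proof
          fix y assume "y \<in> U \<inter> M"
          then show "y \<in> {a}" using Msep[of a y U] a U by blast
        qed
        then show ?thesis by (rule finite_subset) simp
      qed simp
      have "closedin X (U \<inter> M)"
        using t1 fin MC CX unfolding t1_space_closedin_finite by blast
      then have "openin X (U - (U \<inter> M))" using opn U by (intro openin_diff) auto
      moreover have "z \<in> U - (U \<inter> M)" using U zM by blast
      moreover have zc: "\<And>T. z \<in> T \<Longrightarrow> openin X T \<Longrightarrow> \<exists>y\<in>M. y \<in> T"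
        using z unfolding in_closure_of by auto
      ultimately have "\<exists>y\<in>M. y \<in> U - (U \<inter> M)" by (meson zc)
      then show False by blast
    qed
  qed
  have MX: "M \<subseteq> topspace X" using MC CX by (rule subset_trans)
  have "closedin X M" using closure_of_subset_eq[of M X] clo MX by blast
  moreover have "subtopology X M = discrete_topology M"
  proof -
    have "openin (subtopology X M) {x}" if xM2: "x \<in> M" for x
    proof -
      obtain U where "openin X U" "U \<inter> M = {x}" using single[OF xM2] by blast
      then show ?thesis unfolding openin_subtopology by (intro exI[of _ U]) simp
    qed
    moreover have "topspace (subtopology X M) = M" using MX by (simp add: Int_absorb1)
    ultimately have "discrete_topology M = subtopology X M"
      unfolding discrete_topology_unique by blast
    then show ?thesis by simp
  qed
  ultimately show ?thesis using MC Cst unfolding closed_discrete_def by blast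
qed

theorem corollary4p1:
  fixes X :: "'a topology"
  assumes "t1_space X"
    and "less_than_b (topspace X)"
  shows "set_strongly_star_Hurewicz X \<longleftrightarrow> extent_countable X"
proof
  assume H: "set_strongly_star_Hurewicz X"
  show "extent_countable X"
    unfolding extent_countable_def
  proof (intro allI impI)
    fix D assume cd: "closed_discrete X D"
    show "countable D"
    proof (cases "D = {}")
      case False
      have Dc: "closedin X D" and Dd: "subtopology X D = discrete_topology D"
        using cd unfolding closed_discrete_def by auto
      have DX: "D \<subseteq> topspace X" using Dc closedin_subset by blast
      have "\<forall>d\<in>D. \<exists>U. openin X U \<and> U \<inter> D = {d}"
      proof
        fix d assume "d \<in> D"
        then have "openin (subtopology X D) {d}" using Dd by simp
        then obtain T where "openin X T" "{d} = T \<inter> D" unfolding openin_subtopology by blast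
        then show "\<exists>U. openin X U \<and> U \<inter> D = {d}" by blast
      qed
      then obtain V where V: "\<And>d. d \<in> D \<Longrightarrow> openin X (V d) \<and> V d \<inter> D = {d}" by metis
      define \<U> where "\<U> = (\<lambda>n::nat. V ` D)"
      have clD: "X closure_of D = D" using Dc closure_of_closedin by blast
      have "(\<forall>n. (\<forall>U\<in>\<U> n. openin X U) \<and> X closure_of D \<subseteq> \<Union>(\<U> n))"
        unfolding \<U>_def clD using V by blast
      then have "\<exists>F :: nat \<Rightarrow> 'a set. (\<forall>n. finite (F n) \<and> F n \<subseteq> X closure_of D) \<and>
           (\<forall>x\<in>D. \<forall>\<^sub>F n in sequentially. x \<in> st (F n) (\<U> n))"
        using H[unfolded set_strongly_star_Hurewicz_def, rule_format, of D \<U>] False DX by blast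
      then obtain F where F: "\<And>n. finite (F n) \<and> F n \<subseteq> D"
        and ev: "\<forall>x\<in>D. \<forall>\<^sub>F n in sequentially. x \<in> st (F n) (\<U> n)"
        unfolding clD by blast
      have sub: "x \<in> F n" if h: "x \<in> D" "x \<in> st (F n) (\<U> n)" for x n
      proof -
        obtain d where d: "d \<in> D" "x \<in> V d" "V d \<inter> F n \<noteq> {}"
          using h(2) unfolding st_def \<U>_def by blast
        have Vd: "V d \<inter> D = {d}" using V d(1) by blast
        have "x \<in> V d \<inter> D" using d h(1) by blast
        then have "x = d" using Vd by blast
        obtain y where "y \<in> V d" "y \<in> F n" using d by blast
        moreover have "F n \<subseteq> D" using F[of n] by blast
        ultimately have "y \<in> V d \<inter> D" by blast
        then have "y = d" using Vd by blast
        then show ?thesis using \<open>x = d\<close> \<open>y \<in> F n\<close> by simp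
      qed
      have "D \<subseteq> (\<Union>m. \<Inter>n\<in>{m..}. F n)"
      proof
        fix x assume x: "x \<in> D"
        then obtain m where "\<forall>n\<ge>m. x \<in> st (F n) (\<U> n)"
          using ev unfolding eventually_sequentially by blast
        then have "\<forall>n\<ge>m. x \<in> F n" using sub x by blast
        then show "x \<in> (\<Union>m. \<Inter>n\<in>{m..}. F n)" by blast
      qed
      moreover have "countable (\<Union>m. \<Inter>n\<in>{m..}. F n)"
      proof (rule countable_UN)
        fix m
        have "finite (\<Inter>n\<in>{m..}. F n)" using F[of m] by (rule conjE) (erule finite_subset[rotated], auto)
        then show "countable (\<Inter>n\<in>{m..}. F n)" by (rule countable_finite)
      qed simp
      ultimately show ?thesis using countable_subset by blast
    qed simp
  qed
next
  assume E: "extent_countable X"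
  show "set_strongly_star_Hurewicz X"
    unfolding set_strongly_star_Hurewicz_def
  proof (intro allI impI)
    fix A :: "'a set" and \<U> :: "nat \<Rightarrow> 'a set set"
    assume a: "A \<noteq> {} \<and> A \<subseteq> topspace X \<and> (\<forall>n. (\<forall>U\<in>\<U> n. openin X U) \<and> X closure_of A \<subseteq> \<Union>(\<U> n))"
    define C where "C = X closure_of A"
    have Cc: "closedin X C" unfolding C_def by simp
    have AC: "A \<subseteq> C" unfolding C_def using a closure_of_subset by blast
    have "\<exists>M. M \<subseteq> C \<and> C \<subseteq> st M (\<U> n) \<and> closed_discrete X M" for n
    proof -
      have "\<forall>U\<in>\<U> n. openin X U" "C \<subseteq> \<Union>(\<U> n)" using a unfolding C_def by auto
      then show ?thesis by (rule sep_maximal[OF assms(1) Cc])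
    qed
    then have "\<forall>n. \<exists>M. M \<subseteq> C \<and> C \<subseteq> st M (\<U> n) \<and> closed_discrete X M" by blast
    then obtain D where D0: "\<forall>n. D n \<subseteq> C \<and> C \<subseteq> st (D n) (\<U> n) \<and> closed_discrete X (D n)"
      by (rule choice[THEN exE])
    have D: "D n \<subseteq> C \<and> C \<subseteq> st (D n) (\<U> n) \<and> closed_discrete X (D n)" for n
      using D0 by (rule spec)
    have Dne: "D n \<noteq> {}" for n
    proof -
      obtain x where "x \<in> A" using a by blast
      then have "x \<in> st (D n) (\<U> n)" using AC D[of n] by blast
      then show ?thesis by (auto simp: st_def)
    qed
    have Dcnt: "countable (D n)" for n
    proof -
      have "closed_discrete X (D n)" using D[of n] by (elim conjE)
      then show ?thesis by (rule E[unfolded extent_countable_def, rule_format])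
    qed
    define e where "e n = from_nat_into (D n)" for n
    have rng: "range (e n) = D n" for n unfolding e_def using Dne Dcnt by simp
    define f where "f x n = (LEAST k. \<exists>U\<in>\<U> n. x \<in> U \<and> e n k \<in> U)" for x n
    have fprop: "\<exists>U\<in>\<U> n. x \<in> U \<and> e n (f x n) \<in> U" if "x \<in> A" for x n
    proof -
      have "x \<in> st (D n) (\<U> n)" using that AC D[of n] by blast
      then obtain U y where "U \<in> \<U> n" "x \<in> U" "y \<in> D n" "y \<in> U" unfolding st_def by blast
      moreover obtain k where "y = e n k" using rng[of n] \<open>y \<in> D n\<close> by blast
      ultimately have "\<exists>k. \<exists>U\<in>\<U> n. x \<in> U \<and> e n k \<in> U" by blast
      then show ?thesis unfolding f_def by (rule LeastI_ex)
    qed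
    have "\<not> unbounded_family (f ` A)"
    proof
      assume "unbounded_family (f ` A)"
      then have "(card_of (topspace X), card_of (f ` A)) \<in> ordLess"
        using assms(2) unfolding less_than_b_def by blast
      moreover have "(card_of (f ` A), card_of A) \<in> ordLeq" by (rule card_of_image)
      moreover have "(card_of A, card_of (topspace X)) \<in> ordLeq" using a by (intro card_of_mono1) blast
      ultimately show False
        using not_ordLess_ordLeq ordLeq_transitive by blast
    qed
    then obtain g where g: "\<forall>h\<in>f ` A. le_star h g" unfolding unbounded_family_def by blast
    define F where "F n = e n ` {..g n}" for n
    show "\<exists>F :: nat \<Rightarrow> 'a set. (\<forall>n. finite (F n) \<and> F n \<subseteq> X closure_of A) \<and>
           (\<forall>x\<in>A. \<forall>\<^sub>F n in sequentially. x \<in> st (F n) (\<U> n))"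
    proof (intro exI conjI allI ballI)
      fix n show "finite (F n)" unfolding F_def by simp
      show "F n \<subseteq> X closure_of A" unfolding F_def using rng[of n] D[of n] C_def by blast
    next
      fix x assume x: "x \<in> A"
      then have "\<forall>\<^sub>F n in sequentially. f x n \<le> g n" using g unfolding le_star_def by blast
      then show "\<forall>\<^sub>F n in sequentially. x \<in> st (F n) (\<U> n)"
      proof (rule eventually_mono)
        fix n assume "f x n \<le> g n"
        then have "e n (f x n) \<in> F n" unfolding F_def by simp
        then show "x \<in> st (F n) (\<U> n)" using fprop[OF x, of n] unfolding st_def by blast
      qed
    qed
  qed
qed

end
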